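(* Let $G=(V,E,w)$ be an undirected graph with edge weights $w:E\to\mathbb{R}^+$, and let $s,t\in V$. Run the bidirectional stepping search described in the context, using the pruning rule "prune $u^{\oplus}$ (for $\oplus\in\{+,-\}$) if and only if $\delta[u^{\oplus}]\ge \mu/2$", where $\mu$ is the current value of the global variable at the time of the check. Then, for every choice of thresholds $\theta$ in the rounds and every interleaving of the parallel atomic operations, if the algorithm terminates (i.e. the frontier becomes empty), the returned value $\mu$ equals the shortest-path distance $d(s,t)$ in $G$ (with $d(s,t)=+\infty$ if $t$ is unreachable from $s$).
   Context: Bidirectional stepping search with a pruning rule. For every vertex $v\in V$ there are two copies: $v^{+}$ (search from $s$) and $v^{-}$ (search from $t$). Each copy has a tentative distance $\delta[v^{\pm}]$, initialized to $+\infty$. A global variable $\mu$ is initialized to $+\infty$. Initialization sets $\delta[s^{+}]=0$ and $\delta[t^{-}]=0$, and inserts $s^{+}$ and $t^{-}$ into a set $F$, the frontier. While $F\neq\emptyset$, a round is executed. A real threshold $\theta$ is chosen, and it may depend arbitrarily on the current state. All elements $u^{\oplus}\in F$ with $\delta[u^{\oplus}]\le\theta$ are removed from $F$. Each removed $u^{\oplus}$ is processed in parallel as follows: - If $u^{\oplus}$ satisfies the pruning rule, nothing is done. - Otherwise, for every neighbor $v$ of $u$, the algorithm performs an atomic write-min $\delta[v^{\oplus}]\leftarrow\min(\delta[v^{\oplus}],\,\delta[u^{\oplus}]+w(u,v))$. - If this write-min strictly decreased $\delta[v^{\oplus}]$, the algorithm then atomically sets $\mu\leftarrow\min(\mu,\,\delta[v^{+}]+\delta[v^{-}])$.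 After that, if $v^{\oplus}$ does not satisfy the pruning rule, $v^{\oplus}$ is inserted into $F$ (if not already present). At termination the algorithm returns $\mu$. Tentative distances only decrease over time. $d(u,v)$ denotes the true shortest-path distance in $G$. *)

theory Defs
  imports Complex_Main "HOL-Library.Extended_Real" "HOL-Library.Multiset"
begin

definition wgraph :: "'v set \<Rightarrow> ('v \<times> 'v) set \<Rightarrow> ('v \<Rightarrow> 'v \<Rightarrow> real) \<Rightarrow> bool" where
  "wgraph V E w \<longleftrightarrow> finite V \<and> E \<subseteq> V \<times> V \<and> sym E
     \<and> (\<forall>(u,v)\<in>E. w u v > 0 \<and> w u v = w v u)"

definition is_walk :: "('v \<times> 'v) set \<Rightarrow> 'v list \<Rightarrow> bool" where
  "is_walk E p \<longleftrightarrow> p \<noteq> [] \<and> (\<forall>i < length p - 1. (p ! i, p ! Suc i) \<in> E)"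

definition walk_weight :: "('v \<Rightarrow> 'v \<Rightarrow> real) \<Rightarrow> 'v list \<Rightarrow> real" where
  "walk_weight w p = (\<Sum>i < length p - 1. w (p ! i) (p ! Suc i))"

text \<open>Shortest-path distance d(s,t); equals \<infinity> (Inf of the empty set) if t is unreachable.\<close>
definition sp_dist :: "('v \<times> 'v) set \<Rightarrow> ('v \<Rightarrow> 'v \<Rightarrow> real) \<Rightarrow> 'v \<Rightarrow> 'v \<Rightarrow> ereal" where
  "sp_dist E w s t = (INF p \<in> {p. is_walk E p \<and> hd p = s \<and> last p = t}. ereal (walk_weight w p))"

text \<open>Copies of vertices: (v, True) is v^+ (search from s), (v, False) is v^- (search from t).
  Pending atomic operations of the threads of the current round:\<close>
datatype 'v act =
    Check "'v \<times> bool"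
  | Relax "'v \<times> bool" 'v
  | UpdMu 'v bool
  | Ins "'v \<times> bool"

record 'v bstate =
  dl   :: "'v \<times> bool \<Rightarrow> ereal"
  mu   :: ereal
  fr   :: "('v \<times> bool) set"
  pend :: "'v act multiset"

definition prune :: "'v bstate \<Rightarrow> 'v \<times> bool \<Rightarrow> bool" where
  "prune \<sigma> x \<longleftrightarrow> dl \<sigma> x \<ge> mu \<sigma> / 2"

definition init_state :: "'v \<Rightarrow> 'v \<Rightarrow> 'v bstate" where
  "init_state s t = \<lparr> dl = (\<lambda>_. \<infinity>)((s, True) := 0, (t, False) := 0), mu = \<infinity>,
                      fr = {(s, True), (t, False)}, pend = {#} \<rparr>"

inductive bstep :: "('v \<times> 'v) set \<Rightarrow> ('v \<Rightarrow> 'v \<Rightarrow> real) \<Rightarrow> 'v bstate \<Rightarrow> 'v bstate \<Rightarrow> bool"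
  for E w where
  round: "pend \<sigma> = {#} \<Longrightarrow> fr \<sigma> \<noteq> {} \<Longrightarrow> R = {x \<in> fr \<sigma>. dl \<sigma> x \<le> ereal \<theta>} \<Longrightarrow>
     bstep E w \<sigma> (\<sigma>\<lparr>fr := fr \<sigma> - R, pend := image_mset Check (mset_set R)\<rparr>)"
| check_prune: "Check x \<in># pend \<sigma> \<Longrightarrow> prune \<sigma> x \<Longrightarrow>
     bstep E w \<sigma> (\<sigma>\<lparr>pend := pend \<sigma> - {#Check x#}\<rparr>)"
| check_go: "Check x \<in># pend \<sigma> \<Longrightarrow> \<not> prune \<sigma> x \<Longrightarrow>
     bstep E w \<sigma> (\<sigma>\<lparr>pend := pend \<sigma> - {#Check x#}
                      + image_mset (Relax x) (mset_set {v. (fst x, v) \<in> E})\<rparr>)"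
| relax_dec: "Relax (u, b) v \<in># pend \<sigma> \<Longrightarrow> dl \<sigma> (u, b) + ereal (w u v) < dl \<sigma> (v, b) \<Longrightarrow>
     bstep E w \<sigma> (\<sigma>\<lparr>dl := (dl \<sigma>)((v, b) := dl \<sigma> (u, b) + ereal (w u v)),
                      pend := pend \<sigma> - {#Relax (u, b) v#} + {#UpdMu v b#}\<rparr>)"
| relax_nodec: "Relax (u, b) v \<in># pend \<sigma> \<Longrightarrow> \<not> dl \<sigma> (u, b) + ereal (w u v) < dl \<sigma> (v, b) \<Longrightarrow>
     bstep E w \<sigma> (\<sigma>\<lparr>pend := pend \<sigma> - {#Relax (u, b) v#}\<rparr>)"
| updmu: "UpdMu v b \<in># pend \<sigma> \<Longrightarrow>
     bstep E w \<sigma> (\<sigma>\<lparr>mu := min (mu \<sigma>) (dl \<sigma> (v, True) + dl \<sigma> (v, False)),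
                      pend := pend \<sigma> - {#UpdMu v b#} + {#Ins (v, b)#}\<rparr>)"
| ins_yes: "Ins y \<in># pend \<sigma> \<Longrightarrow> \<not> prune \<sigma> y \<Longrightarrow>
     bstep E w \<sigma> (\<sigma>\<lparr>fr := insert y (fr \<sigma>), pend := pend \<sigma> - {#Ins y#}\<rparr>)"
| ins_no: "Ins y \<in># pend \<sigma> \<Longrightarrow> prune \<sigma> y \<Longrightarrow>
     bstep E w \<sigma> (\<sigma>\<lparr>pend := pend \<sigma> - {#Ins y#}\<rparr>)"

end

theory Submission
  imports Defs
begin


lemma in_remove1_mset_neq: "a \<noteq> b \<Longrightarrow> a \<in># M - {#b#} \<longleftrightarrow> a \<in># M"
  by (simp add: in_diff_count)

lemma prune_iff: "prune \<sigma> x \<longleftrightarrow> mu \<sigma> \<le> 2 * dl \<sigma> x"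
  unfolding prune_def by (cases "dl \<sigma> x"; cases "mu \<sigma>") auto

lemma walk_weight_Cons: "walk_weight w (x # y # r) = w x y + walk_weight w (y # r)"
  unfolding walk_weight_def length_Cons diff_Suc_1
  by (subst sum.lessThan_Suc_shift) simp

lemma walk_weight_single: "walk_weight w [x] = 0"
  unfolding walk_weight_def by simp

lemma is_walk_Cons: "is_walk E (x # y # r) \<longleftrightarrow> (x,y) \<in> E \<and> is_walk E (y # r)"
  unfolding is_walk_def by (auto simp: less_Suc_eq_0_disj)

lemma is_walk_single: "is_walk E [x]"
  unfolding is_walk_def by simp

lemma walk_append:
  "is_walk E p \<Longrightarrow> is_walk E q \<Longrightarrow> last p = hd q \<Longrightarrow>
   is_walk E (p @ tl q) \<and> walk_weight w (p @ tl q) = walk_weight w p + walk_weight w q"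
proof (induction p)
  case Nil
  then show ?case by (simp add: is_walk_def)
next
  case (Cons x r)
  show ?case
  proof (cases r)
    case Nil
    have "q \<noteq> []" using Cons.prems by (simp add: is_walk_def)
    then have "q = x # tl q" using Cons.prems Nil by (cases q) auto
    then show ?thesis using Nil Cons.prems by (simp add: walk_weight_single)
  next
    fix y r' assume rr: "r = y # r'"
    have q: "q \<noteq> []" using Cons.prems by (simp add: is_walk_def)
    have e: "(x,y) \<in> E" and wr: "is_walk E r" using Cons.prems(1) rr by (simp_all add: is_walk_Cons)
    have "last r = hd q" using Cons.prems rr by simp
    with Cons.IH wr Cons.prems(2) have IH: "is_walk E (r @ tl q) \<and> walk_weight w (r @ tl q) = walk_weight w r + walk_weight w q"
      by blast
    have rq: "r @ tl q = y # (r' @ tl q)" using rr by simp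
    have "is_walk E (x # y # (r' @ tl q))" using IH e rq by (simp only: is_walk_Cons)
    moreover have "walk_weight w (x # y # (r' @ tl q)) = w x y + walk_weight w (r @ tl q)"
      using rq by (simp only: walk_weight_Cons)
    moreover have "walk_weight w (x # r) = w x y + walk_weight w r"
      using rr by (simp only: walk_weight_Cons)
    ultimately show ?thesis using IH rr by simp
  qed
qed

lemma walk_append_hd_last:
  "p \<noteq> [] \<Longrightarrow> q \<noteq> [] \<Longrightarrow> last p = hd q \<Longrightarrow> hd (p @ tl q) = hd p \<and> last (p @ tl q) = last q"
  by (cases q) auto



definition ok1 :: "('v \<Rightarrow> 'v \<Rightarrow> real) \<Rightarrow> 'v bstate \<Rightarrow> 'v \<Rightarrow> bool \<Rightarrow> 'v \<Rightarrow> bool" where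
  "ok1 w \<sigma> u b v \<longleftrightarrow>
     mu \<sigma> \<le> 2 * dl \<sigma> (u,b) \<or> dl \<sigma> (v,b) \<le> dl \<sigma> (u,b) + ereal (w u v) \<or> (u,b) \<in> fr \<sigma>
     \<or> Check (u,b) \<in># pend \<sigma> \<or> Relax (u,b) v \<in># pend \<sigma> \<or> UpdMu u b \<in># pend \<sigma> \<or> Ins (u,b) \<in># pend \<sigma>"

definition inv1 :: "('v \<times> 'v) set \<Rightarrow> ('v \<Rightarrow> 'v \<Rightarrow> real) \<Rightarrow> 'v bstate \<Rightarrow> bool" where
  "inv1 E w \<sigma> \<longleftrightarrow> finite (fr \<sigma>) \<and> (\<forall>u b v. (u,v) \<in> E \<longrightarrow> ok1 w \<sigma> u b v)"

lemma inv1I: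
  assumes "inv1 E w \<sigma>" "finite (fr \<sigma>')"
    "\<And>u b v. (u,v) \<in> E \<Longrightarrow> ok1 w \<sigma> u b v \<Longrightarrow> ok1 w \<sigma>' u b v"
  shows "inv1 E w \<sigma>'"
  using assms unfolding inv1_def by blast

lemma finite_nbrs: "finite E \<Longrightarrow> finite {v. (u, v) \<in> E}"
  by (rule finite_subset[of _ "snd ` E"]) force+

lemma inv1_step:
  assumes st: "bstep E w \<sigma> \<sigma>'" and I: "inv1 E w \<sigma>" and fE: "finite E"
  shows "inv1 E w \<sigma>'"
  using st
proof cases
  case (round R \<theta>)
  have fR: "finite R" using I round by (auto simp: inv1_def)
  show ?thesis
  proof (rule inv1I[OF I])
    show "finite (fr \<sigma>')" using I round by (auto simp: inv1_def)
    fix u b v assume "ok1 w \<sigma> u b v"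
    then have "mu \<sigma> \<le> 2 * dl \<sigma> (u,b) \<or> dl \<sigma> (v,b) \<le> dl \<sigma> (u,b) + ereal (w u v) \<or> (u,b) \<in> fr \<sigma>"
      using round by (simp add: ok1_def)
    moreover have "(u,b) \<in> fr \<sigma> \<Longrightarrow> (u,b) \<in> fr \<sigma>' \<or> Check (u,b) \<in># pend \<sigma>'"
      using round fR by auto
    ultimately show "ok1 w \<sigma>' u b v" using round unfolding ok1_def by auto
  qed
next
  case (check_prune x)
  have eqs: "dl \<sigma>' = dl \<sigma>" "mu \<sigma>' = mu \<sigma>" "fr \<sigma>' = fr \<sigma>" using check_prune(1) by simp_all
  have pp: "\<And>a. a \<in># pend \<sigma> \<Longrightarrow> a \<noteq> Check x \<Longrightarrow> a \<in># pend \<sigma>'"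
    using check_prune(1) by (simp add: in_remove1_mset_neq)
  show ?thesis
  proof (rule inv1I[OF I])
    show "finite (fr \<sigma>')" using I eqs by (simp add: inv1_def)
    fix u b v assume o: "ok1 w \<sigma> u b v"
    show "ok1 w \<sigma>' u b v"
    proof (cases "x = (u,b)")
      case True
      have "mu \<sigma>' \<le> 2 * dl \<sigma>' (u,b)" using check_prune(3) True unfolding prune_iff eqs by simp
      then show ?thesis unfolding ok1_def by (rule disjI1)
    next
      case False
      then have "Check (u,b) \<noteq> Check x" by simp
      then show ?thesis using o pp unfolding ok1_def eqs by (metis act.distinct)
    qed
  qed
next
  case (check_go x)
  have fN: "finite {v. (fst x, v) \<in> E}" by (rule finite_nbrs[OF fE])
  have eqs: "dl \<sigma>' = dl \<sigma>" "mu \<sigma>' = mu \<sigma>" "fr \<sigma>' = fr \<sigma>" using check_go(1) by simp_all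
  have pp: "\<And>a. a \<in># pend \<sigma> \<Longrightarrow> a \<noteq> Check x \<Longrightarrow> a \<in># pend \<sigma>'"
    using check_go(1) by (simp add: in_remove1_mset_neq)
  have rl: "\<And>v. (fst x, v) \<in> E \<Longrightarrow> Relax x v \<in># pend \<sigma>'"
    using check_go(1) fN by simp
  show ?thesis
  proof (rule inv1I[OF I])
    show "finite (fr \<sigma>')" using I eqs by (simp add: inv1_def)
    fix u b v assume e: "(u,v) \<in> E" and o: "ok1 w \<sigma> u b v"
    show "ok1 w \<sigma>' u b v"
    proof (cases "x = (u,b)")
      case True
      have "Relax (u,b) v \<in># pend \<sigma>'"
        using rl[of v] e True by simp
      then show ?thesis unfolding ok1_def by blast
    next
      case False
      then have "Check (u,b) \<noteq> Check x" by simp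
      then show ?thesis using o pp unfolding ok1_def eqs by (metis act.distinct)
    qed
  qed
next
  case (relax_dec u0 b0 v0)
  have eqs: "mu \<sigma>' = mu \<sigma>" "fr \<sigma>' = fr \<sigma>" using relax_dec(1) by simp_all
  have dl': "dl \<sigma>' = (dl \<sigma>)((v0,b0) := dl \<sigma> (u0,b0) + ereal (w u0 v0))" using relax_dec(1) by simp
  have pp: "\<And>a. a \<in># pend \<sigma> \<Longrightarrow> a \<noteq> Relax (u0,b0) v0 \<Longrightarrow> a \<in># pend \<sigma>'"
    using relax_dec(1) by (simp add: in_remove1_mset_neq)
  have upd: "UpdMu v0 b0 \<in># pend \<sigma>'" using relax_dec(1) by simp
  have dec: "\<And>y. dl \<sigma>' y \<le> dl \<sigma> y"
  proof -
    fix y show "dl \<sigma>' y \<le> dl \<sigma> y"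
      using relax_dec(3) unfolding dl' by (cases "y = (v0,b0)") (simp_all add: less_imp_le)
  qed
  show ?thesis
  proof (rule inv1I[OF I])
    show "finite (fr \<sigma>')" using I eqs by (simp add: inv1_def)
    fix u b v assume e: "(u,v) \<in> E" and o: "ok1 w \<sigma> u b v"
    show "ok1 w \<sigma>' u b v"
    proof (cases "(u,b) = (v0,b0)")
      case True
      then have "UpdMu u b \<in># pend \<sigma>'" using upd by simp
      then show ?thesis unfolding ok1_def by blast
    next
      case ne: False
      have dlu: "dl \<sigma>' (u,b) = dl \<sigma> (u,b)" unfolding dl' using ne by (rule fun_upd_other)
      show ?thesis
      proof (cases "(u,b,v) = (u0,b0,v0)")
        case True
        have "dl \<sigma>' (v,b) = dl \<sigma> (u0,b0) + ereal (w u0 v0)" using True unfolding dl' by simp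
        then have "dl \<sigma>' (v,b) \<le> dl \<sigma>' (u,b) + ereal (w u v)" using True dlu by simp
        then show ?thesis unfolding ok1_def by blast
      next
        case False
        have "Relax (u,b) v \<noteq> Relax (u0,b0) v0" using False by simp
        then show ?thesis using o pp dlu order_trans[OF dec] unfolding ok1_def eqs
          by (metis act.distinct)
      qed
    qed
  qed
next
  case (relax_nodec u0 b0 v0)
  have eqs: "dl \<sigma>' = dl \<sigma>" "mu \<sigma>' = mu \<sigma>" "fr \<sigma>' = fr \<sigma>" using relax_nodec(1) by simp_all
  have pp: "\<And>a. a \<in># pend \<sigma> \<Longrightarrow> a \<noteq> Relax (u0,b0) v0 \<Longrightarrow> a \<in># pend \<sigma>'"
    using relax_nodec(1) by (simp add: in_remove1_mset_neq)
  show ?thesis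
  proof (rule inv1I[OF I])
    show "finite (fr \<sigma>')" using I eqs by (simp add: inv1_def)
    fix u b v assume o: "ok1 w \<sigma> u b v"
    show "ok1 w \<sigma>' u b v"
    proof (cases "(u,b,v) = (u0,b0,v0)")
      case True
      have "dl \<sigma>' (v,b) \<le> dl \<sigma>' (u,b) + ereal (w u v)" using relax_nodec(3) True unfolding eqs not_less by simp
      then show ?thesis unfolding ok1_def by blast
    next
      case False
      then have "Relax (u,b) v \<noteq> Relax (u0,b0) v0" by simp
      then show ?thesis using o pp unfolding ok1_def eqs by (metis act.distinct)
    qed
  qed
next
  case (updmu v0 b0)
  show ?thesis
  proof (rule inv1I[OF I])
    show "finite (fr \<sigma>')" using I updmu by (auto simp: inv1_def)
    fix u b v assume "ok1 w \<sigma> u b v"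
    have m: "mu \<sigma>' \<le> mu \<sigma>" using updmu by auto
    show "ok1 w \<sigma>' u b v"
      using \<open>ok1 w \<sigma> u b v\<close> updmu order_trans[OF m] unfolding ok1_def
      by (cases "(u,b) = (v0,b0)") (auto simp: in_remove1_mset_neq)
  qed
next
  case (ins_yes y)
  show ?thesis
  proof (rule inv1I[OF I])
    show "finite (fr \<sigma>')" using I ins_yes by (auto simp: inv1_def)
    fix u b v assume "ok1 w \<sigma> u b v"
    then show "ok1 w \<sigma>' u b v"
      using ins_yes unfolding ok1_def
      by (cases "y = (u,b)") (auto simp: in_remove1_mset_neq)
  qed
next
  case (ins_no y)
  have eqs: "dl \<sigma>' = dl \<sigma>" "mu \<sigma>' = mu \<sigma>" "fr \<sigma>' = fr \<sigma>" using ins_no(1) by simp_all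
  have pp: "\<And>a. a \<in># pend \<sigma> \<Longrightarrow> a \<noteq> Ins y \<Longrightarrow> a \<in># pend \<sigma>'"
    using ins_no(1) by (simp add: in_remove1_mset_neq)
  show ?thesis
  proof (rule inv1I[OF I])
    show "finite (fr \<sigma>')" using I eqs by (simp add: inv1_def)
    fix u b v assume o: "ok1 w \<sigma> u b v"
    show "ok1 w \<sigma>' u b v"
    proof (cases "y = (u,b)")
      case True
      have "mu \<sigma>' \<le> 2 * dl \<sigma>' (u,b)" using ins_no(3) True unfolding prune_iff eqs by simp
      then show ?thesis unfolding ok1_def by (rule disjI1)
    next
      case False
      then have "Ins (u,b) \<noteq> Ins y" by simp
      then show ?thesis using o pp unfolding ok1_def eqs by (metis act.distinct)
    qed
  qed
qed



lemma in_pend_keep: "a \<noteq> b \<Longrightarrow> a \<in># M \<Longrightarrow> a \<in># M - {#b#} + N"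
  by (simp add: in_remove1_mset_neq)

lemma step_mono:
  assumes "bstep E w \<sigma> \<sigma>'"
  shows "dl \<sigma>' y \<le> dl \<sigma> y \<and> mu \<sigma>' \<le> mu \<sigma>"
  using assms
proof cases
  case (relax_dec u0 b0 v0)
  then show ?thesis by (cases "y = (v0,b0)") (simp_all add: less_imp_le)
qed simp_all

definition inv2 :: "'v bstate \<Rightarrow> bool" where
  "inv2 \<sigma> \<longleftrightarrow> (\<forall>v. mu \<sigma> \<le> dl \<sigma> (v,True) + dl \<sigma> (v,False) \<or> UpdMu v True \<in># pend \<sigma> \<or> UpdMu v False \<in># pend \<sigma>)"

lemma inv2_step:
  assumes st: "bstep E w \<sigma> \<sigma>'" and I: "inv2 \<sigma>"
  shows "inv2 \<sigma>'"
  using st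
proof cases
  case (round R \<theta>)
  have eqs: "dl \<sigma>' = dl \<sigma>" "mu \<sigma>' = mu \<sigma>" using round(1) by simp_all
  show ?thesis using I round(2) unfolding inv2_def eqs by simp
next
  case (check_prune x)
  have eqs: "dl \<sigma>' = dl \<sigma>" "mu \<sigma>' = mu \<sigma>" using check_prune(1) by simp_all
  have pp: "\<And>v b. UpdMu v b \<in># pend \<sigma> \<Longrightarrow> UpdMu v b \<in># pend \<sigma>'"
    using check_prune(1) by (simp add: in_remove1_mset_neq)
  show ?thesis using I pp unfolding inv2_def eqs by blast
next
  case (check_go x)
  have eqs: "dl \<sigma>' = dl \<sigma>" "mu \<sigma>' = mu \<sigma>" using check_go(1) by simp_all
  have pp: "\<And>v b. UpdMu v b \<in># pend \<sigma> \<Longrightarrow> UpdMu v b \<in># pend \<sigma>'"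
    using check_go(1) by (auto simp: in_remove1_mset_neq)
  show ?thesis using I pp unfolding inv2_def eqs by blast
next
  case (relax_nodec u0 b0 v0)
  have eqs: "dl \<sigma>' = dl \<sigma>" "mu \<sigma>' = mu \<sigma>" using relax_nodec(1) by simp_all
  have pp: "\<And>v b. UpdMu v b \<in># pend \<sigma> \<Longrightarrow> UpdMu v b \<in># pend \<sigma>'"
    using relax_nodec(1) by (simp add: in_remove1_mset_neq)
  show ?thesis using I pp unfolding inv2_def eqs by blast
next
  case (ins_yes y)
  have eqs: "dl \<sigma>' = dl \<sigma>" "mu \<sigma>' = mu \<sigma>" using ins_yes(1) by simp_all
  have pp: "\<And>v b. UpdMu v b \<in># pend \<sigma> \<Longrightarrow> UpdMu v b \<in># pend \<sigma>'"
    using ins_yes(1) by (simp add: in_remove1_mset_neq)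
  show ?thesis using I pp unfolding inv2_def eqs by blast
next
  case (ins_no y)
  have eqs: "dl \<sigma>' = dl \<sigma>" "mu \<sigma>' = mu \<sigma>" using ins_no(1) by simp_all
  have pp: "\<And>v b. UpdMu v b \<in># pend \<sigma> \<Longrightarrow> UpdMu v b \<in># pend \<sigma>'"
    using ins_no(1) by (simp add: in_remove1_mset_neq)
  show ?thesis using I pp unfolding inv2_def eqs by blast
next
  case (relax_dec u0 b0 v0)
  have eqs: "mu \<sigma>' = mu \<sigma>" using relax_dec(1) by simp_all
  have dl': "dl \<sigma>' = (dl \<sigma>)((v0,b0) := dl \<sigma> (u0,b0) + ereal (w u0 v0))" using relax_dec(1) by simp
  have pp: "\<And>v b. UpdMu v b \<in># pend \<sigma> \<Longrightarrow> UpdMu v b \<in># pend \<sigma>'"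
    using relax_dec(1) by (auto simp: in_remove1_mset_neq)
  have upd: "UpdMu v0 b0 \<in># pend \<sigma>'" using relax_dec(1) by simp
  show ?thesis unfolding inv2_def
  proof
    fix v
    show "mu \<sigma>' \<le> dl \<sigma>' (v,True) + dl \<sigma>' (v,False) \<or> UpdMu v True \<in># pend \<sigma>' \<or> UpdMu v False \<in># pend \<sigma>'"
    proof (cases "v = v0")
      case True
      then show ?thesis using upd by (cases b0) simp_all
    next
      case False
      then have "dl \<sigma>' (v,True) = dl \<sigma> (v,True)" "dl \<sigma>' (v,False) = dl \<sigma> (v,False)"
        unfolding dl' by simp_all
      then show ?thesis using I pp unfolding inv2_def eqs by metis
    qed
  qed
next
  case (updmu v0 b0)
  have eqs: "dl \<sigma>' = dl \<sigma>" "mu \<sigma>' = min (mu \<sigma>) (dl \<sigma> (v0, True) + dl \<sigma> (v0, False))"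
    using updmu(1) by simp_all
  have pp: "\<And>v b. v \<noteq> v0 \<Longrightarrow> UpdMu v b \<in># pend \<sigma> \<Longrightarrow> UpdMu v b \<in># pend \<sigma>'"
    using updmu(1) by (auto simp: in_remove1_mset_neq)
  show ?thesis unfolding inv2_def
  proof
    fix v
    show "mu \<sigma>' \<le> dl \<sigma>' (v,True) + dl \<sigma>' (v,False) \<or> UpdMu v True \<in># pend \<sigma>' \<or> UpdMu v False \<in># pend \<sigma>'"
    proof (cases "v = v0")
      case True
      then show ?thesis unfolding eqs by simp
    next
      case False
      have m: "mu \<sigma>' \<le> mu \<sigma>" unfolding eqs by simp
      show ?thesis using I pp[OF False] order_trans[OF m] unfolding inv2_def eqs(1) by metis
    qed
  qed
qed

definition walks_ok :: "('v \<times> 'v) set \<Rightarrow> ('v \<Rightarrow> 'v \<Rightarrow> real) \<Rightarrow> 'v \<Rightarrow> 'v \<Rightarrow> 'v bstate \<Rightarrow> bool" where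
  "walks_ok E w s t \<sigma> \<longleftrightarrow> (\<forall>v b. dl \<sigma> (v,b) = \<infinity> \<or> (\<exists>p. is_walk E p \<and> hd p = (if b then s else v)
      \<and> last p = (if b then v else t) \<and> dl \<sigma> (v,b) = ereal (walk_weight w p)))"

definition mu_ok :: "('v \<times> 'v) set \<Rightarrow> ('v \<Rightarrow> 'v \<Rightarrow> real) \<Rightarrow> 'v \<Rightarrow> 'v \<Rightarrow> 'v bstate \<Rightarrow> bool" where
  "mu_ok E w s t \<sigma> \<longleftrightarrow> mu \<sigma> = \<infinity> \<or> (\<exists>p. is_walk E p \<and> hd p = s \<and> last p = t \<and> mu \<sigma> = ereal (walk_weight w p))"

definition relax_ok :: "('v \<times> 'v) set \<Rightarrow> 'v bstate \<Rightarrow> bool" where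
  "relax_ok E \<sigma> \<longleftrightarrow> (\<forall>u b v. Relax (u,b) v \<in># pend \<sigma> \<longrightarrow> (u,v) \<in> E)"

definition invS where
  "invS E w s t \<sigma> \<longleftrightarrow> walks_ok E w s t \<sigma> \<and> mu_ok E w s t \<sigma> \<and> relax_ok E \<sigma>"

lemma invS_same:
  assumes "invS E w s t \<sigma>" "dl \<sigma>' = dl \<sigma>" "mu \<sigma>' = mu \<sigma>"
    "\<And>u b v. Relax (u,b) v \<in># pend \<sigma>' \<Longrightarrow> Relax (u,b) v \<in># pend \<sigma>"
  shows "invS E w s t \<sigma>'"
  using assms(1,4) unfolding invS_def walks_ok_def mu_ok_def relax_ok_def assms(2,3) by blast

lemma walk_two: "(u,v) \<in> E \<Longrightarrow> is_walk E [u,v]"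
  by (simp add: is_walk_Cons is_walk_single)

lemma ww_two: "walk_weight w [u,v] = w u v"
  by (simp add: walk_weight_Cons walk_weight_single)

lemma invS_step:
  assumes st: "bstep E w \<sigma> \<sigma>'" and I: "invS E w s t \<sigma>" and G: "wgraph V E w"
  shows "invS E w s t \<sigma>'"
  using st
proof cases
  case (round R \<theta>)
  show ?thesis by (rule invS_same[OF I]) (use round(1) in auto)
next
  case (check_prune x)
  show ?thesis by (rule invS_same[OF I]) (use check_prune(1) in \<open>auto dest: in_diffD\<close>)
next
  case (relax_nodec u0 b0 v0)
  show ?thesis by (rule invS_same[OF I]) (use relax_nodec(1) in \<open>auto dest: in_diffD\<close>)
next
  case (ins_yes y)
  show ?thesis by (rule invS_same[OF I]) (use ins_yes(1) in \<open>auto dest: in_diffD\<close>)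
next
  case (ins_no y)
  show ?thesis by (rule invS_same[OF I]) (use ins_no(1) in \<open>auto dest: in_diffD\<close>)
next
  case (check_go x)
  have fE: "finite E" using G unfolding wgraph_def by (meson finite_SigmaI finite_subset)
  have fN: "finite {v. (fst x, v) \<in> E}" by (rule finite_nbrs[OF fE])
  have eqs: "dl \<sigma>' = dl \<sigma>" "mu \<sigma>' = mu \<sigma>" using check_go(1) by simp_all
  have rl: "relax_ok E \<sigma>'" unfolding relax_ok_def
  proof (intro allI impI)
    fix u b v assume "Relax (u,b) v \<in># pend \<sigma>'"
    then have "Relax (u,b) v \<in># pend \<sigma> \<or> ((u,b) = x \<and> (fst x, v) \<in> E)"
      using check_go(1) fN by (auto simp: in_diff_count)
    then show "(u,v) \<in> E" using I unfolding invS_def relax_ok_def by auto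
  qed
  show ?thesis using I rl unfolding invS_def walks_ok_def mu_ok_def eqs by simp
next
  case (relax_dec u0 b0 v0)
  have eqs: "mu \<sigma>' = mu \<sigma>" using relax_dec(1) by simp_all
  have dl': "dl \<sigma>' = (dl \<sigma>)((v0,b0) := dl \<sigma> (u0,b0) + ereal (w u0 v0))" using relax_dec(1) by simp
  have rl: "relax_ok E \<sigma>'" using I relax_dec(1) unfolding invS_def relax_ok_def
    by (auto dest: in_diffD)
  have e: "(u0,v0) \<in> E" using I relax_dec(2) unfolding invS_def relax_ok_def by blast
  have e': "(v0,u0) \<in> E" and ws: "w v0 u0 = w u0 v0"
    using G e unfolding wgraph_def sym_def by auto
  have fin: "dl \<sigma> (u0,b0) \<noteq> \<infinity>"
  proof
    assume "dl \<sigma> (u0,b0) = \<infinity>"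
    then show False using relax_dec(3) by simp
  qed
  then obtain p where p: "is_walk E p" "hd p = (if b0 then s else u0)"
      "last p = (if b0 then u0 else t)" "dl \<sigma> (u0,b0) = ereal (walk_weight w p)"
    using I unfolding invS_def walks_ok_def by blast
  have pne: "p \<noteq> []" using p(1) by (simp add: is_walk_def)
  have newp: "\<exists>q. is_walk E q \<and> hd q = (if b0 then s else v0) \<and> last q = (if b0 then v0 else t)
       \<and> dl \<sigma> (u0,b0) + ereal (w u0 v0) = ereal (walk_weight w q)"
  proof (cases b0)
    case True
    have A: "is_walk E (p @ tl [u0,v0]) \<and> walk_weight w (p @ tl [u0,v0]) = walk_weight w p + walk_weight w [u0,v0]"
      by (rule walk_append) (use p True walk_two[OF e] in simp_all)
    have B: "hd (p @ tl [u0,v0]) = hd p \<and> last (p @ tl [u0,v0]) = last [u0,v0]"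
      by (rule walk_append_hd_last) (use p True pne in simp_all)
    show ?thesis
      by (rule exI[of _ "p @ tl [u0,v0]"]) (use A B p True in \<open>simp add: ww_two\<close>)
  next
    case False
    have A: "is_walk E ([v0,u0] @ tl p) \<and> walk_weight w ([v0,u0] @ tl p) = walk_weight w [v0,u0] + walk_weight w p"
      by (rule walk_append) (use p False walk_two[OF e'] in simp_all)
    have B: "hd ([v0,u0] @ tl p) = hd [v0,u0] \<and> last ([v0,u0] @ tl p) = last p"
      by (rule walk_append_hd_last) (use p False pne in simp_all)
    show ?thesis
      by (rule exI[of _ "[v0,u0] @ tl p"]) (use A B p False ws in \<open>simp add: ww_two add.commute\<close>)
  qed
  have wk: "walks_ok E w s t \<sigma>'" unfolding walks_ok_def
  proof (intro allI)
    fix v b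
    show "dl \<sigma>' (v,b) = \<infinity> \<or> (\<exists>p. is_walk E p \<and> hd p = (if b then s else v)
      \<and> last p = (if b then v else t) \<and> dl \<sigma>' (v,b) = ereal (walk_weight w p))"
    proof (cases "(v,b) = (v0,b0)")
      case True
      then show ?thesis using newp unfolding dl' by auto
    next
      case False
      then have "dl \<sigma>' (v,b) = dl \<sigma> (v,b)" unfolding dl' by (rule fun_upd_other)
      then show ?thesis using I unfolding invS_def walks_ok_def by metis
    qed
  qed
  show ?thesis using I rl wk unfolding invS_def mu_ok_def eqs by simp
next
  case (updmu v0 b0)
  have eqs: "dl \<sigma>' = dl \<sigma>" "mu \<sigma>' = min (mu \<sigma>) (dl \<sigma> (v0, True) + dl \<sigma> (v0, False))"
    using updmu(1) by simp_all
  have rl: "relax_ok E \<sigma>'" using I updmu(1) unfolding invS_def relax_ok_def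
    by (auto dest: in_diffD)
  have mo: "mu_ok E w s t \<sigma>'"
  proof (cases "dl \<sigma> (v0, True) = \<infinity> \<or> dl \<sigma> (v0, False) = \<infinity>")
    case True
    have "dl \<sigma> (v0, True) \<noteq> -\<infinity>" "dl \<sigma> (v0, False) \<noteq> -\<infinity>"
      using I unfolding invS_def walks_ok_def by (metis MInfty_neq_PInfty(1) MInfty_neq_ereal(1))+
    then have S: "dl \<sigma> (v0, True) + dl \<sigma> (v0, False) = \<infinity>" using True by auto
    have "mu_ok E w s t \<sigma>" using I unfolding invS_def by simp
    then show ?thesis unfolding mu_ok_def eqs S by simp
  next
    case False
    then obtain p1 p2 where p1: "is_walk E p1" "hd p1 = s" "last p1 = v0" "dl \<sigma> (v0,True) = ereal (walk_weight w p1)"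
      and p2: "is_walk E p2" "hd p2 = v0" "last p2 = t" "dl \<sigma> (v0,False) = ereal (walk_weight w p2)"
      using I unfolding invS_def walks_ok_def by (metis (full_types))
    have ne: "p1 \<noteq> []" "p2 \<noteq> []" using p1(1) p2(1) by (simp_all add: is_walk_def)
    have A: "is_walk E (p1 @ tl p2) \<and> walk_weight w (p1 @ tl p2) = walk_weight w p1 + walk_weight w p2"
      by (rule walk_append) (use p1 p2 in simp_all)
    have B: "hd (p1 @ tl p2) = hd p1 \<and> last (p1 @ tl p2) = last p2"
      by (rule walk_append_hd_last) (use p1 p2 ne in simp_all)
    have sumw: "dl \<sigma> (v0, True) + dl \<sigma> (v0, False) = ereal (walk_weight w (p1 @ tl p2))"
      using A p1(4) p2(4) by simp
    show ?thesis
    proof (cases "mu \<sigma> \<le> dl \<sigma> (v0, True) + dl \<sigma> (v0, False)")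
      case True
      then show ?thesis using I unfolding invS_def mu_ok_def eqs by (simp add: min_def)
    next
      case False
      then show ?thesis unfolding mu_ok_def eqs using A B p1 p2 sumw by (auto simp: min_def)
    qed
  qed
  show ?thesis using I rl mo unfolding invS_def walks_ok_def eqs(1) by simp
qed



lemma aux_lt: "d \<le> ereal x \<Longrightarrow> 2 * x \<le> W \<Longrightarrow> ereal W < M \<Longrightarrow> \<not> M \<le> 2 * d"
  by (cases d; cases M) auto

lemma core:
  fixes D :: "'v \<times> bool \<Rightarrow> ereal" and M :: ereal
  assumes H1: "\<And>u v b. (u,v) \<in> E \<Longrightarrow> M \<le> 2 * D (u,b) \<or> D (v,b) \<le> D (u,b) + ereal (w u v)"
    and H2: "\<And>v. M \<le> D (v,True) + D (v,False)"
    and H3: "D (s,True) \<le> 0" "D (t,False) \<le> 0"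
    and symE: "\<And>u v. (u,v) \<in> E \<Longrightarrow> (v,u) \<in> E \<and> w v u = w u v \<and> w u v > 0"
    and pw: "is_walk E p" "hd p = s" "last p = t"
  shows "M \<le> ereal (walk_weight w p)"
proof (rule ccontr)
  define n where "n = length p"
  define a where "a i = (\<Sum>k<i. w (p!k) (p!Suc k))" for i
  define W where "W = walk_weight w p"
  assume "\<not> M \<le> ereal (walk_weight w p)"
  then have MW: "ereal W < M" unfolding W_def by simp
  have n0: "n > 0" using pw(1) unfolding n_def is_walk_def by simp
  have Wa: "W = a (n-1)" unfolding W_def a_def n_def walk_weight_def by simp
  have edge: "\<And>i. Suc i < n \<Longrightarrow> (p!i, p!Suc i) \<in> E" using pw(1) unfolding is_walk_def n_def by auto
  have aS: "\<And>i. a (Suc i) = a i + w (p!i) (p!Suc i)" unfolding a_def by simp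
  have amono: "a i \<le> a j" if "i \<le> j" "j < n" for i j
    using that
  proof (induction j rule: dec_induct)
    case base then show ?case by simp
  next
    case (step j)
    have "w (p!j) (p!Suc j) > 0" using symE edge step by blast
    then show ?case using step aS[of j] by simp
  qed
  have a0: "a 0 = 0" unfolding a_def by simp
  have W0: "W \<ge> 0" using amono[of 0 "n-1"] n0 a0 Wa by simp
  have hd0: "p!0 = s" using pw(2) n0 unfolding n_def by (simp add: hd_conv_nth)
  have lastn: "p!(n-1) = t" using pw(3) n0 unfolding n_def by (simp add: last_conv_nth)
  have fwd: "i < n \<longrightarrow> (\<forall>j<i. 2 * a j < W) \<longrightarrow> D (p!i,True) \<le> ereal (a i)" for i
  proof (induction i)
    case 0 then show ?case using hd0 H3 a0 by (simp add: zero_ereal_def)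
  next
    case (Suc i)
    show ?case
    proof (intro impI)
      assume A: "Suc i < n" "\<forall>j<Suc i. 2 * a j < W"
      then have Di: "D (p!i,True) \<le> ereal (a i)" using Suc by simp
      have "2 * a i \<le> W" using A by (simp add: less_imp_le)
      then have np: "\<not> M \<le> 2 * D (p!i,True)" using aux_lt[OF Di _ MW] by blast
      have "D (p!Suc i,True) \<le> D (p!i,True) + ereal (w (p!i) (p!Suc i))"
        using H1[OF edge[OF A(1)], of True] np by blast
      also have "\<dots> \<le> ereal (a i) + ereal (w (p!i) (p!Suc i))" using Di by (rule add_right_mono)
      also have "\<dots> = ereal (a (Suc i))" using aS by simp
      finally show "D (p!Suc i,True) \<le> ereal (a (Suc i))" .
    qed
  qed
  have bwd: "m < n \<longrightarrow> (\<forall>j. n-1-m < j \<and> j < n \<longrightarrow> W \<le> 2 * a j) \<longrightarrow> D (p!(n-1-m),False) \<le> ereal (W - a (n-1-m))" for m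
  proof (induction m)
    case 0 then show ?case using lastn H3 Wa by (simp add: zero_ereal_def)
  next
    case (Suc m)
    show ?case
    proof (intro impI)
      assume A: "Suc m < n" "\<forall>j. n-1-Suc m < j \<and> j < n \<longrightarrow> W \<le> 2 * a j"
      define i where "i = n - 1 - Suc m"
      have ii: "Suc i = n - 1 - m" "Suc i < n" using A(1) unfolding i_def by auto
      have "\<forall>j. n-1-m < j \<and> j < n \<longrightarrow> W \<le> 2 * a j" using A(2) by auto
      then have Di: "D (p!Suc i,False) \<le> ereal (W - a (Suc i))" using Suc A(1) ii(1) by simp
      have "W \<le> 2 * a (Suc i)" using A(2) ii unfolding i_def by auto
      then have "2 * (W - a (Suc i)) \<le> W" by simp
      then have np: "\<not> M \<le> 2 * D (p!Suc i,False)" using aux_lt[OF Di _ MW] by blast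
      have e: "(p!Suc i, p!i) \<in> E" and we: "w (p!Suc i) (p!i) = w (p!i) (p!Suc i)"
        using symE[OF edge[OF ii(2)]] by auto
      have "D (p!i,False) \<le> D (p!Suc i,False) + ereal (w (p!Suc i) (p!i))"
        using H1[OF e, of False] np by blast
      also have "\<dots> \<le> ereal (W - a (Suc i)) + ereal (w (p!Suc i) (p!i))" using Di by (rule add_right_mono)
      also have "\<dots> = ereal (W - a i)" using aS[of i] we by simp
      finally show "D (p!(n-1-Suc m),False) \<le> ereal (W - a (n-1-Suc m))" unfolding i_def .
    qed
  qed
  define k where "k = (LEAST k. W \<le> 2 * a k)"
  have ex: "W \<le> 2 * a (n-1)" using Wa W0 by simp
  have kW: "W \<le> 2 * a k" unfolding k_def by (rule LeastI[of "\<lambda>k. W \<le> 2 * a k", OF ex])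
  have kn: "k \<le> n - 1" unfolding k_def by (rule Least_le[of "\<lambda>k. W \<le> 2 * a k", OF ex])
  have lt: "\<forall>j<k. 2 * a j < W"
  proof (intro allI impI)
    fix j assume "j < k"
    then have "\<not> W \<le> 2 * a j" unfolding k_def by (rule not_less_Least)
    then show "2 * a j < W" by simp
  qed
  have gt: "\<forall>j. k < j \<and> j < n \<longrightarrow> W \<le> 2 * a j"
  proof (intro allI impI)
    fix j assume "k < j \<and> j < n"
    then have "a k \<le> a j" using amono[of k j] by simp
    then show "W \<le> 2 * a j" using kW by simp
  qed
  have F: "D (p!k,True) \<le> ereal (a k)" using fwd[of k] kn n0 lt by simp
  have nk: "n - 1 - (n - 1 - k) = k" using kn by simp
  have B: "D (p!k,False) \<le> ereal (W - a k)" using bwd[of "n-1-k"] n0 gt unfolding nk by simp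
  have "M \<le> D (p!k,True) + D (p!k,False)" by (rule H2)
  also have "\<dots> \<le> ereal (a k) + ereal (W - a k)" using F B by (rule add_mono)
  also have "\<dots> = ereal W" by simp
  finally show False using MW by simp
qed



lemma reach:
  assumes G: "wgraph V E w" and st: "s \<noteq> t"
    and r: "(bstep E w)\<^sup>*\<^sup>* (init_state s t) \<sigma>"
  shows "inv1 E w \<sigma> \<and> inv2 \<sigma> \<and> invS E w s t \<sigma> \<and> dl \<sigma> (s,True) \<le> 0 \<and> dl \<sigma> (t,False) \<le> 0"
  using r
proof (induction rule: rtranclp_induct)
  case base
  have i1: "inv1 E w (init_state s t)"
    unfolding inv1_def
  proof (intro conjI allI impI)
    show "finite (fr (init_state s t))" by (simp add: init_state_def)
    fix u b v
    show "ok1 w (init_state s t) u b v"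
    proof (cases "(u,b) = (s,True) \<or> (u,b) = (t,False)")
      case True
      then have "(u,b) \<in> fr (init_state s t)" by (auto simp: init_state_def)
      then show ?thesis unfolding ok1_def by blast
    next
      case False
      then have "dl (init_state s t) (u,b) = \<infinity>" by (auto simp: init_state_def)
      then show ?thesis unfolding ok1_def by simp
    qed
  qed
  have i2: "inv2 (init_state s t)" unfolding inv2_def using st by (simp add: init_state_def)
  have iS: "invS E w s t (init_state s t)"
    unfolding invS_def walks_ok_def mu_ok_def relax_ok_def
  proof (intro conjI allI)
    fix v b
    show "dl (init_state s t) (v,b) = \<infinity> \<or> (\<exists>p. is_walk E p \<and> hd p = (if b then s else v)
      \<and> last p = (if b then v else t) \<and> dl (init_state s t) (v,b) = ereal (walk_weight w p))"
    proof (cases "(v,b) = (s,True) \<or> (v,b) = (t,False)")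
      case True
      then have "dl (init_state s t) (v,b) = 0" using st by (auto simp: init_state_def)
      then show ?thesis using True
        by (intro disjI2 exI[of _ "[v]"]) (auto simp: is_walk_single walk_weight_single zero_ereal_def)
    next
      case False
      then show ?thesis by (auto simp: init_state_def)
    qed
  qed (simp_all add: init_state_def)
  show ?case using i1 i2 iS st by (simp add: init_state_def)
next
  case (step y z)
  have fE: "finite E" using G unfolding wgraph_def by (meson finite_SigmaI finite_subset)
  have m1: "dl z (s,True) \<le> dl y (s,True)" "dl z (t,False) \<le> dl y (t,False)"
    using step_mono[OF step(2)] by blast+
  show ?case using step.IH inv1_step[OF step(2) _ fE] inv2_step[OF step(2)] invS_step[OF step(2) _ G]
      order_trans[OF m1(1)] order_trans[OF m1(2)] by blast
qed

theorem theorem3p2: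
  fixes V :: "'v set" and E :: "('v \<times> 'v) set" and w :: "'v \<Rightarrow> 'v \<Rightarrow> real"
    and s t :: 'v and \<sigma> :: "'v bstate"
  assumes "wgraph V E w" and "s \<in> V" and "t \<in> V" and "s \<noteq> t"
    and "(bstep E w)\<^sup>*\<^sup>* (init_state s t) \<sigma>"
    and "fr \<sigma> = {}" and "pend \<sigma> = {#}"
  shows "mu \<sigma> = sp_dist E w s t"
proof -
  have R: "inv1 E w \<sigma> \<and> inv2 \<sigma> \<and> invS E w s t \<sigma> \<and> dl \<sigma> (s,True) \<le> 0 \<and> dl \<sigma> (t,False) \<le> 0"
    by (rule reach[OF assms(1,4,5)])
  have H1: "\<And>u v b. (u,v) \<in> E \<Longrightarrow> mu \<sigma> \<le> 2 * dl \<sigma> (u,b) \<or> dl \<sigma> (v,b) \<le> dl \<sigma> (u,b) + ereal (w u v)"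
    using R assms(6,7) unfolding inv1_def ok1_def by auto
  have H2: "\<And>v. mu \<sigma> \<le> dl \<sigma> (v,True) + dl \<sigma> (v,False)"
    using R assms(7) unfolding inv2_def by auto
  have symE: "\<And>u v. (u,v) \<in> E \<Longrightarrow> (v,u) \<in> E \<and> w v u = w u v \<and> w u v > 0"
    using assms(1) unfolding wgraph_def sym_def by auto
  have le1: "mu \<sigma> \<le> sp_dist E w s t"
    unfolding sp_dist_def
  proof (rule INF_greatest)
    fix p assume "p \<in> {p. is_walk E p \<and> hd p = s \<and> last p = t}"
    then have pw: "is_walk E p" "hd p = s" "last p = t" by auto
    show "mu \<sigma> \<le> ereal (walk_weight w p)"
      by (rule core[OF H1 H2 _ _ symE pw]) (use R in auto)
  qed
  have le2: "sp_dist E w s t \<le> mu \<sigma>"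
  proof -
    have "mu_ok E w s t \<sigma>" using R unfolding invS_def by simp
    then show ?thesis
    proof (unfold mu_ok_def, elim disjE exE conjE)
      assume "mu \<sigma> = \<infinity>" then show ?thesis by simp
    next
      fix p assume p: "is_walk E p" "hd p = s" "last p = t" "mu \<sigma> = ereal (walk_weight w p)"
      show ?thesis unfolding sp_dist_def p(4) by (rule INF_lower) (use p in simp)
    qed
  qed
  show ?thesis using le1 le2 by (rule antisym)
qed

end
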